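(* Let $d\ge2$, $n\ge1$. For every $n$-qudit unitary $U$, $$\mathrm{CiS}[U]=\max_{O:\ \|O\|_2=1,\ \mathrm{Tr}(O)=0}\big|I[UOU^\dagger]-I[O]\big|.$$
   Context: Let $V=\mathbb{Z}_d\times\mathbb{Z}_d$; for $a=(s,t)\in V$, $P_a=X^sZ^t$ with $X|j\rangle=|j+1\bmod d\rangle$, $Z|j\rangle=e^{2\pi ij/d}|j\rangle$; $P_{\vec a}=\bigotimes_iP_{a_i}$, $|\vec a|=\#\{i:a_i\ne(0,0)\}$. $\|A\|_2=(d^{-n}\mathrm{Tr}(A^\dagger A))^{1/2}$. For $\|O\|_2=1$, $P_O[\vec a]=d^{-2n}|\mathrm{Tr}(OP_{\vec a})|^2$, $I[O]=\sum_{\vec a}|\vec a|P_O[\vec a]$, and $\mathrm{CiS}[U]=\max_{O:\|O\|_2=1}|I[UOU^\dagger]-I[O]|$. *)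

theory Defs
  imports Complex_Main "Jordan_Normal_Form.Matrix"
begin

text \<open>n-qudit operators are complex (d^n x d^n) matrices. The basis index j < d^n
  encodes the computational basis state whose i-th qudit (i < n) is the i-th base-d digit of j.\<close>

definition digit :: "nat \<Rightarrow> nat \<Rightarrow> nat \<Rightarrow> nat" where
  "digit d i j = (j div d ^ i) mod d"

text \<open>Matrix entry (j,k) of X^s Z^t on one qudit, where X|k> = |k+1 mod d>, Z|k> = e^{2 pi i k/d}|k>.\<close>
definition pauli1 :: "nat \<Rightarrow> nat \<times> nat \<Rightarrow> nat \<Rightarrow> nat \<Rightarrow> complex" where
  "pauli1 d a j k = (if j = (k + fst a) mod d then cis (2 * pi * real (snd a * k) / real d) else 0)"

text \<open>Generalized Pauli string P_a = tensor product of P_{a_i}, i < n.\<close>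
definition pauli :: "nat \<Rightarrow> nat \<Rightarrow> (nat \<Rightarrow> nat \<times> nat) \<Rightarrow> complex mat" where
  "pauli d n a = mat (d ^ n) (d ^ n) (\<lambda>(j, k). \<Prod>i<n. pauli1 d (a i) (digit d i j) (digit d i k))"

definition pauli_labels :: "nat \<Rightarrow> nat \<Rightarrow> (nat \<Rightarrow> nat \<times> nat) set" where
  "pauli_labels d n = PiE {..<n} (\<lambda>_. {..<d} \<times> {..<d})"

definition weight :: "nat \<Rightarrow> (nat \<Rightarrow> nat \<times> nat) \<Rightarrow> nat" where
  "weight n a = card {i \<in> {..<n}. a i \<noteq> (0, 0)}"

definition mtrace :: "complex mat \<Rightarrow> complex" where
  "mtrace A = (\<Sum>i<dim_row A. A $$ (i, i))"

definition adj :: "complex mat \<Rightarrow> complex mat" where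
  "adj A = mat (dim_col A) (dim_row A) (\<lambda>(i, j). cnj (A $$ (j, i)))"

definition hs_norm :: "nat \<Rightarrow> nat \<Rightarrow> complex mat \<Rightarrow> real" where
  "hs_norm d n A = sqrt (Re (mtrace (adj A * A)) / real d ^ n)"

definition pauli_weight_dist :: "nat \<Rightarrow> nat \<Rightarrow> complex mat \<Rightarrow> (nat \<Rightarrow> nat \<times> nat) \<Rightarrow> real" where
  "pauli_weight_dist d n Q a = (cmod (mtrace (Q * pauli d n a)))\<^sup>2 / real d ^ (2 * n)"

definition influence :: "nat \<Rightarrow> nat \<Rightarrow> complex mat \<Rightarrow> real" where
  "influence d n Q = (\<Sum>a\<in>pauli_labels d n. real (weight n a) * pauli_weight_dist d n Q a)"

definition CiS :: "nat \<Rightarrow> nat \<Rightarrow> complex mat \<Rightarrow> real" where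
  "CiS d n U = (SUP Q \<in> {Q \<in> carrier_mat (d ^ n) (d ^ n). hs_norm d n Q = 1}.
      \<bar>influence d n (U * Q * adj U) - influence d n Q\<bar>)"

end

theory Submission
  imports Defs
begin


lemma digit_low:
  assumes "j < d ^ n" "i < n" "d > 0"
  shows "digit d i (j + x * d ^ n) = digit d i j"
proof -
  obtain k where k: "n = i + Suc k" using assms(2) by (metis add_Suc_right less_imp_Suc_add)
  have e: "x * d ^ n = (x * d ^ k * d) * d ^ i"
    unfolding k power_add power_Suc by (simp only: mult_ac)
  have p: "d ^ i \<noteq> 0" using assms(3) by simp
  have "(j + x * d ^ n) div d ^ i = (x * d ^ k * d) + j div d ^ i"
    unfolding e using div_mult_self1[OF p, of j "x * d ^ k * d"] by simp
  then show ?thesis unfolding digit_def by (simp only: mod_mult_self3)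
qed

lemma digit_top:
  assumes "j < d ^ n" "x < d"
  shows "digit d n (j + x * d ^ n) = x"
proof -
  have "d ^ n > 0" using assms by (metis gr0I less_zeroE power_eq_0_iff zero_less_iff_neq_zero)
  then have "(j + x * d ^ n) div d ^ n = x" using assms by simp
  then show ?thesis unfolding digit_def using assms by simp
qed

lemma sum_digits_prod:
  assumes "d > 0"
  shows "(\<Sum>j<d ^ n. \<Prod>i<n. h i (digit d i j)) = (\<Prod>i<n. \<Sum>x<d. h i x :: complex)"
proof (induction n)
  case 0
  then show ?case by simp
next
  case (Suc n)
  have "(\<Sum>j<d ^ Suc n. \<Prod>i<Suc n. h i (digit d i j))
      = (\<Sum>x<d. sum (\<lambda>j. \<Prod>i<Suc n. h i (digit d i j)) {x * d ^ n..<x * d ^ n + d ^ n})"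
    by (simp add: sum.nat_group mult.commute)
  also have "\<dots> = (\<Sum>x<d. \<Sum>j<d ^ n. \<Prod>i<Suc n. h i (digit d i (j + x * d ^ n)))"
  proof (rule sum.cong[OF refl])
    fix x
    show "sum (\<lambda>j. \<Prod>i<Suc n. h i (digit d i j)) {x * d ^ n..<x * d ^ n + d ^ n}
       = (\<Sum>j<d ^ n. \<Prod>i<Suc n. h i (digit d i (j + x * d ^ n)))"
      using sum.shift_bounds_nat_ivl[of "\<lambda>j. \<Prod>i<Suc n. h i (digit d i j)" 0 "x * d ^ n" "d ^ n"]
      by (simp add: atLeast0LessThan add.commute)
  qed
  also have "\<dots> = (\<Sum>x<d. \<Sum>j<d ^ n. h n x * (\<Prod>i<n. h i (digit d i j)))"
  proof (intro sum.cong refl)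
    fix x j assume x: "x \<in> {..<d}" and j: "j \<in> {..<d ^ n}"
    have "(\<Prod>i<n. h i (digit d i (j + x * d ^ n))) = (\<Prod>i<n. h i (digit d i j))"
      using x j assms by (intro prod.cong refl) (simp add: digit_low)
    then show "(\<Prod>i<Suc n. h i (digit d i (j + x * d ^ n))) = h n x * (\<Prod>i<n. h i (digit d i j))"
      using x j by (simp add: digit_top mult.commute)
  qed
  also have "\<dots> = (\<Sum>x<d. h n x) * (\<Prod>i<n. \<Sum>x<d. h i x)"
    by (simp add: sum_distrib_left[symmetric] sum_distrib_right Suc.IH)
  finally show ?case by (simp add: mult.commute)
qed



lemma sum_pauli1_diag:
  assumes "s < d" "t < d" "(s, t) \<noteq> (0, 0)"
  shows "(\<Sum>x<d. pauli1 d (s, t) x x) = 0"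
proof (cases "s = 0")
  case False
  have "\<not> (x = (x + s) mod d)" if "x < d" for x
  proof
    assume h: "x = (x + s) mod d"
    show False
    proof (cases "x + s < d")
      case True then show False using h False by simp
    next
      case f: False
      then have "(x + s) mod d = x + s - d" using assms(1) that
        by (simp add: le_mod_geq)
      then show False using h assms(1) f by linarith
    qed
  qed
  then show ?thesis unfolding pauli1_def by simp
next
  case True
  then have t: "0 < t" using assms(3) by simp
  have d: "d > 0" using assms by simp
  define w where "w = cis (2 * pi * real t / real d)"
  have pw: "pauli1 d (s, t) x x = w ^ x" if "x < d" for x
    unfolding pauli1_def w_def True DeMoivre using that by (simp add: field_simps)
  have w1: "w \<noteq> 1"
  proof
    assume "w = 1"
    then have "cos (2 * pi * real t / real d) = 1" unfolding w_def
      by (metis cis.sel(1) one_complex.sel(1))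
    then obtain k :: int where k: "2 * pi * real t / real d = k * 2 * pi"
      by (auto simp: cos_one_2pi_int)
    then have "real t = k * real d" using d by (simp add: field_simps)
    then have "int t = k * int d" by (metis of_int_eq_iff of_int_mult of_int_of_nat_eq)
    then show False using t assms(2)
      by (metis dvd_triv_right int_dvd_int_iff nat_dvd_not_less)
  qed
  have wd: "w ^ d = 1" unfolding w_def DeMoivre using d
  proof -
    have "real d * (2 * pi * real t / real d) = 2 * pi * real t" using d by simp
    then show "cis (real d * (2 * pi * real t / real d)) = 1"
      by (simp add: cis_multiple_2pi)
  qed
  have "(\<Sum>x<d. pauli1 d (s, t) x x) = (\<Sum>x<d. w ^ x)" using pw by (intro sum.cong) auto
  then show ?thesis unfolding geometric_sum[OF w1] wd by simp
qed

lemma trace_pauli: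
  assumes "a \<in> pauli_labels d n" "weight n a > 0" "d > 0"
  shows "mtrace (pauli d n a) = 0"
proof -
  have "mtrace (pauli d n a) = (\<Sum>j<d ^ n. \<Prod>i<n. pauli1 d (a i) (digit d i j) (digit d i j))"
    unfolding mtrace_def pauli_def by simp
  also have "\<dots> = (\<Prod>i<n. \<Sum>x<d. pauli1 d (a i) x x)"
    by (rule sum_digits_prod[OF assms(3)])
  also have "\<dots> = 0"
  proof -
    obtain i where i: "i < n" "a i \<noteq> (0, 0)"
      using assms(2) unfolding weight_def card_gt_0_iff by auto
    have "a i \<in> {..<d} \<times> {..<d}" using assms(1) i unfolding pauli_labels_def by (auto simp: PiE_iff)
    then have "(\<Sum>x<d. pauli1 d (a i) x x) = 0"
      using i sum_pauli1_diag[of "fst (a i)" d "snd (a i)"] by auto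
    then show ?thesis using i by (intro prod_zero) auto
  qed
  finally show ?thesis .
qed


lemma pauli_carrier: "pauli d n a \<in> carrier_mat (d ^ n) (d ^ n)"
  unfolding pauli_def by simp

lemma adj_carrier: "A \<in> carrier_mat m k \<Longrightarrow> adj A \<in> carrier_mat k m"
  unfolding adj_def by simp

lemma adj_index: "A \<in> carrier_mat m k \<Longrightarrow> i < k \<Longrightarrow> j < m \<Longrightarrow> adj A $$ (i, j) = cnj (A $$ (j, i))"
  unfolding adj_def by simp

lemma mtrace_mult:
  assumes "A \<in> carrier_mat N N" "B \<in> carrier_mat N N"
  shows "mtrace (A * B) = (\<Sum>i<N. \<Sum>k<N. A $$ (i, k) * B $$ (k, i))"
  using assms unfolding mtrace_def
  by (auto simp: scalar_prod_def atLeast0LessThan intro!: sum.cong)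

lemma g_shift:
  assumes "Q \<in> carrier_mat N N" "P \<in> carrier_mat N N"
  shows "mtrace ((Q + c \<cdot>\<^sub>m 1\<^sub>m N) * P) = mtrace (Q * P) + c * mtrace P"
proof -
  have "mtrace ((Q + c \<cdot>\<^sub>m 1\<^sub>m N) * P) = (\<Sum>i<N. \<Sum>k<N. (Q $$ (i, k) + c * (if i = k then 1 else 0)) * P $$ (k, i))"
    using assms by (subst mtrace_mult[of _ N]) (auto intro!: sum.cong)
  also have "\<dots> = (\<Sum>i<N. (\<Sum>k<N. Q $$ (i, k) * P $$ (k, i)) + c * P $$ (i, i))"
  proof (intro sum.cong refl)
    fix i assume i: "i \<in> {..<N}"
    have "(Q $$ (i, k) + c * (if i = k then 1 else 0)) * P $$ (k, i)
        = Q $$ (i, k) * P $$ (k, i) + (if i = k then c * P $$ (k, i) else 0)" for k by (simp add: distrib_right)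
    then show "(\<Sum>k<N. (Q $$ (i, k) + c * (if i = k then 1 else 0)) * P $$ (k, i))
        = (\<Sum>k<N. Q $$ (i, k) * P $$ (k, i)) + c * P $$ (i, i)"
      using i by (simp only: sum.distrib sum.delta) simp
  qed
  also have "\<dots> = mtrace (Q * P) + c * mtrace P"
  proof -
    have "mtrace P = (\<Sum>i<N. P $$ (i, i))" using assms by (simp add: mtrace_def)
    then show ?thesis by (simp add: mtrace_mult[OF assms] sum.distrib sum_distrib_left)
  qed
  finally show ?thesis .
qed

lemma g_scale:
  assumes "Q \<in> carrier_mat N N" "P \<in> carrier_mat N N"
  shows "mtrace ((c \<cdot>\<^sub>m Q) * P) = c * mtrace (Q * P)"
  using assms by (simp add: mtrace_mult[of _ N] sum_distrib_left mult.assoc)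

lemma infl_shift:
  assumes "Q \<in> carrier_mat (d ^ n) (d ^ n)" "d > 0"
  shows "influence d n (Q + c \<cdot>\<^sub>m 1\<^sub>m (d ^ n)) = influence d n Q"
  unfolding influence_def
proof (intro sum.cong refl)
  fix a assume a: "a \<in> pauli_labels d n"
  show "real (weight n a) * pauli_weight_dist d n (Q + c \<cdot>\<^sub>m 1\<^sub>m (d ^ n)) a =
        real (weight n a) * pauli_weight_dist d n Q a"
  proof (cases "weight n a = 0")
    case False
    then have "mtrace (pauli d n a) = 0" using trace_pauli[OF a _ assms(2)] by simp
    then show ?thesis unfolding pauli_weight_dist_def
      using g_shift[OF assms(1) pauli_carrier] by simp
  qed simp
qed

lemma infl_scale:
  assumes "Q \<in> carrier_mat (d ^ n) (d ^ n)"
  shows "influence d n (c \<cdot>\<^sub>m Q) = (cmod c)\<^sup>2 * influence d n Q"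
  unfolding influence_def pauli_weight_dist_def sum_distrib_left
  using g_scale[OF assms pauli_carrier]
  by (intro sum.cong refl) (simp add: norm_mult power_mult_distrib)

lemma hs_sum:
  assumes "A \<in> carrier_mat N N"
  shows "Re (mtrace (adj A * A)) = (\<Sum>i<N. \<Sum>k<N. (cmod (A $$ (k, i)))\<^sup>2)"
proof -
  have "mtrace (adj A * A) = (\<Sum>i<N. \<Sum>k<N. cnj (A $$ (k, i)) * A $$ (k, i))"
    using assms by (simp add: mtrace_mult[of _ N] adj_carrier adj_index)
  also have "\<dots> = (\<Sum>i<N. \<Sum>k<N. complex_of_real ((cmod (A $$ (k, i)))\<^sup>2))"
  proof (intro sum.cong refl)
    fix i k
    show "cnj (A $$ (k, i)) * A $$ (k, i) = complex_of_real ((cmod (A $$ (k, i)))\<^sup>2)"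
      by (simp only: complex_norm_square mult.commute)
  qed
  finally show ?thesis by (simp only: of_real_sum[symmetric] Re_complex_of_real)
qed



lemma conj_shift:
  assumes U: "U \<in> carrier_mat N N" and B: "B \<in> carrier_mat N N" and uu: "U * adj U = 1\<^sub>m N"
  shows "U * (B + c \<cdot>\<^sub>m 1\<^sub>m N) * adj U = U * B * adj U + c \<cdot>\<^sub>m 1\<^sub>m N"
proof -
  have aU: "adj U \<in> carrier_mat N N" using adj_carrier[OF U] .
  have "U * (c \<cdot>\<^sub>m 1\<^sub>m N) = c \<cdot>\<^sub>m U" using U by (simp add: mult_smult_distrib[of U N N "1\<^sub>m N" N])
  then have "U * (B + c \<cdot>\<^sub>m 1\<^sub>m N) = U * B + c \<cdot>\<^sub>m U"
    using U B by (simp add: mult_add_distrib_mat[of _ N N])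
  then have "U * (B + c \<cdot>\<^sub>m 1\<^sub>m N) * adj U = U * B * adj U + (c \<cdot>\<^sub>m U) * adj U"
    using U B aU by (simp add: add_mult_distrib_mat[of _ N N])
  also have "(c \<cdot>\<^sub>m U) * adj U = c \<cdot>\<^sub>m 1\<^sub>m N"
    using U aU uu by (simp add: mult_smult_assoc_mat[of _ N N])
  finally show ?thesis .
qed

lemma conj_scale:
  assumes U: "U \<in> carrier_mat N N" and B: "B \<in> carrier_mat N N"
  shows "U * (c \<cdot>\<^sub>m B) * adj U = c \<cdot>\<^sub>m (U * B * adj U)"
proof -
  have aU: "adj U \<in> carrier_mat N N" using adj_carrier[OF U] .
  show ?thesis using U B aU
    by (simp add: mult_smult_distrib[of _ N N] mult_smult_assoc_mat[of _ N N])
qed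

lemma cmod_diff_sq: "(cmod (z - c))\<^sup>2 = (cmod z)\<^sup>2 + (cmod c)\<^sup>2 - 2 * Re (z * cnj c)"
  unfolding cmod_power2 by (simp add: power2_eq_square algebra_simps)

lemma hs_shift_le:
  assumes Q: "Q \<in> carrier_mat N N" and c: "c = mtrace Q / of_nat N" and N: "N > 0"
  shows "Re (mtrace (adj (Q + (- c) \<cdot>\<^sub>m 1\<^sub>m N) * (Q + (- c) \<cdot>\<^sub>m 1\<^sub>m N))) \<le> Re (mtrace (adj Q * Q))"
proof -
  let ?O = "Q + (- c) \<cdot>\<^sub>m 1\<^sub>m N"
  have OC: "?O \<in> carrier_mat N N" using Q by simp
  have tr: "mtrace Q = (\<Sum>i<N. Q $$ (i, i))" using Q by (simp add: mtrace_def)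
  have e: "(cmod (?O $$ (k, i)))\<^sup>2 = (cmod (Q $$ (k, i)))\<^sup>2 +
      (if k = i then (cmod c)\<^sup>2 - 2 * Re (Q $$ (i, i) * cnj c) else 0)" if "i < N" "k < N" for i k
    using that Q by (auto simp: cmod_diff_sq)
  have "Re (mtrace (adj ?O * ?O)) = (\<Sum>i<N. \<Sum>k<N. (cmod (?O $$ (k, i)))\<^sup>2)"
    by (rule hs_sum[OF OC])
  also have "\<dots> = (\<Sum>i<N. (\<Sum>k<N. (cmod (Q $$ (k, i)))\<^sup>2) + ((cmod c)\<^sup>2 - 2 * Re (Q $$ (i, i) * cnj c)))"
    using e by (simp add: sum.distrib sum.delta')
  also have "\<dots> = Re (mtrace (adj Q * Q)) + (real N * (cmod c)\<^sup>2 - 2 * Re (mtrace Q * cnj c))"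
    by (simp add: hs_sum[OF Q] sum.distrib sum_subtractf tr sum_distrib_right[symmetric] sum_distrib_left[symmetric])
  also have "mtrace Q * cnj c = of_real (real N * (cmod c)\<^sup>2)"
  proof -
    have "mtrace Q = of_nat N * c" using c N by simp
    then have "mtrace Q * cnj c = of_nat N * (c * cnj c)" by simp
    also have "\<dots> = of_real (real N * (cmod c)\<^sup>2)" by (simp add: complex_norm_square[symmetric])
    finally show ?thesis .
  qed
  finally show ?thesis by simp
qed



lemma mtrace_smult: "A \<in> carrier_mat N N \<Longrightarrow> mtrace (c \<cdot>\<^sub>m A) = c * mtrace A"
  by (simp add: mtrace_def sum_distrib_left)

lemma hs_scale:
  assumes "A \<in> carrier_mat N N"
  shows "Re (mtrace (adj (complex_of_real r \<cdot>\<^sub>m A) * (complex_of_real r \<cdot>\<^sub>m A))) = r\<^sup>2 * Re (mtrace (adj A * A))"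
  using assms by (simp add: hs_sum[of _ N] sum_distrib_left norm_mult power_mult_distrib)

lemma hs_nonneg:
  assumes "A \<in> carrier_mat N N"
  shows "Re (mtrace (adj A * A)) \<ge> 0"
  using assms by (simp add: hs_sum[of _ N] sum_nonneg)

lemma hs_zero:
  assumes A: "A \<in> carrier_mat N N" and z: "Re (mtrace (adj A * A)) = 0"
  shows "A = 0\<^sub>m N N"
proof (rule eq_matI)
  fix i j assume i: "i < dim_row (0\<^sub>m N N :: complex mat)" and j: "j < dim_col (0\<^sub>m N N :: complex mat)"
  have "(\<Sum>i<N. \<Sum>k<N. (cmod (A $$ (k, i)))\<^sup>2) = 0" using z hs_sum[OF A] by simp
  then have "\<forall>i\<in>{..<N}. (\<Sum>k<N. (cmod (A $$ (k, i)))\<^sup>2) = 0"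
    by (subst (asm) sum_nonneg_eq_0_iff) (auto intro: sum_nonneg)
  then have "(\<Sum>k<N. (cmod (A $$ (k, j)))\<^sup>2) = 0" using j by simp
  then have "(cmod (A $$ (i, j)))\<^sup>2 = 0" using i
    by (subst (asm) sum_nonneg_eq_0_iff) auto
  then show "A $$ (i, j) = 0\<^sub>m N N $$ (i, j)" using i j by simp
qed (use A in auto)

lemma exists_traceless:
  assumes "d \<ge> 2" "n \<ge> 1"
  shows "\<exists>Q0. Q0 \<in> carrier_mat (d ^ n) (d ^ n) \<and> hs_norm d n Q0 = 1 \<and> mtrace Q0 = 0"
proof -
  let ?N = "d ^ n"
  have N2: "?N \<ge> 2" using assms
  proof -
    have "d ^ 1 \<le> d ^ n" using assms by (intro power_increasing) auto
    then show ?thesis using assms by simp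
  qed
  define s where "s = complex_of_real (sqrt (real ?N / 2))"
  define Q0 where "Q0 = mat ?N ?N (\<lambda>(i, k). if i = k then (if i = 0 then s else 0) + (if i = 1 then - s else 0) else 0)"
  have C: "Q0 \<in> carrier_mat ?N ?N" unfolding Q0_def by simp
  have "mtrace Q0 = (\<Sum>i<?N. (if i = 0 then s else 0) + (if i = 1 then - s else 0))"
    unfolding mtrace_def Q0_def by simp
  also have "\<dots> = 0" using N2 assms by (simp add: sum.distrib)
  finally have tr: "mtrace Q0 = 0" .
  have "Re (mtrace (adj Q0 * Q0)) = (\<Sum>i<?N. \<Sum>k<?N. (cmod (Q0 $$ (k, i)))\<^sup>2)"
    by (rule hs_sum[OF C])
  also have "\<dots> = (\<Sum>i<?N. \<Sum>k<?N. if k = i then (if i = 0 then real ?N / 2 else 0) + (if i = 1 then real ?N / 2 else 0) else 0)"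
  proof (intro sum.cong refl)
    fix i k assume i: "i \<in> {..<?N}" and k: "k \<in> {..<?N}"
    have cs: "(cmod s)\<^sup>2 = real ?N / 2" unfolding s_def by simp
    show "(cmod (Q0 $$ (k, i)))\<^sup>2 = (if k = i then (if i = 0 then real ?N / 2 else 0) + (if i = 1 then real ?N / 2 else 0) else 0)"
      using i k cs by (cases "k = i"; cases "i = 0"; cases "i = 1") (simp_all add: Q0_def)
  qed
  also have "\<dots> = real ?N" using N2 assms by (simp add: sum.distrib)
  finally have "Re (mtrace (adj Q0 * Q0)) = real d ^ n" by simp
  then have "hs_norm d n Q0 = 1" unfolding hs_norm_def using assms by simp
  then show ?thesis using C tr by blast
qed



lemma key:
  fixes d n :: nat and U Q :: "complex mat"
  assumes d: "d \<ge> 2" and n: "n \<ge> 1"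
    and U: "U \<in> carrier_mat (d ^ n) (d ^ n)"
    and uu: "U * adj U = 1\<^sub>m (d ^ n)"
    and Q: "Q \<in> carrier_mat (d ^ n) (d ^ n)" and hQ: "hs_norm d n Q = 1"
    and Q0: "Q0 \<in> carrier_mat (d ^ n) (d ^ n)" "hs_norm d n Q0 = 1" "mtrace Q0 = 0"
  shows "\<exists>Q'. Q' \<in> {Q \<in> carrier_mat (d ^ n) (d ^ n). hs_norm d n Q = 1 \<and> mtrace Q = 0} \<and>
     \<bar>influence d n (U * Q * adj U) - influence d n Q\<bar> \<le> \<bar>influence d n (U * Q' * adj U) - influence d n Q'\<bar>"
proof -
  define N where "N = d ^ n"
  define f where "f Q = \<bar>influence d n (U * Q * adj U) - influence d n Q\<bar>" for Q
  have Npos: "N > 0" "d > 0" using d unfolding N_def by auto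
  have rN: "real N = real d ^ n" unfolding N_def by simp
  have aU: "adj U \<in> carrier_mat N N" using adj_carrier U unfolding N_def by blast
  define c where "c = mtrace Q / of_nat N"
  define B where "B = Q + (- c) \<cdot>\<^sub>m 1\<^sub>m N"
  have BC: "B \<in> carrier_mat N N" using Q unfolding B_def N_def by simp
  have QB: "Q = B + c \<cdot>\<^sub>m 1\<^sub>m N"
    using Q unfolding B_def N_def by (intro eq_matI) auto
  have UBC: "U * B * adj U \<in> carrier_mat N N" using U BC aU unfolding N_def by simp
  have fQB: "f Q = f B"
  proof -
    have "U * Q * adj U = U * B * adj U + c \<cdot>\<^sub>m 1\<^sub>m N"
      unfolding QB using conj_shift[of U N B c] U BC uu unfolding N_def by simp
    then show ?thesis unfolding f_def QB using infl_shift[of _ d n c] UBC BC Npos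
      unfolding N_def by simp
  qed
  have trQ: "mtrace Q = (\<Sum>i<N. Q $$ (i, i))" using Q unfolding N_def by (simp add: mtrace_def)
  have trB: "mtrace B = 0"
  proof -
    have "mtrace B = (\<Sum>i<N. Q $$ (i, i) - c)" using Q unfolding B_def N_def by (simp add: mtrace_def)
    also have "\<dots> = mtrace Q - of_nat N * c" by (simp add: sum_subtractf trQ)
    also have "\<dots> = 0" unfolding c_def using Npos by simp
    finally show ?thesis .
  qed
  have hsQ: "Re (mtrace (adj Q * Q)) = real N"
  proof -
    have "sqrt (Re (mtrace (adj Q * Q)) / real d ^ n) = 1" using hQ unfolding hs_norm_def .
    then have "Re (mtrace (adj Q * Q)) / real d ^ n = 1" by (simp only: real_sqrt_eq_1_iff)
    then show ?thesis using rN Npos by (simp add: field_simps)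
  qed
  have hsB: "Re (mtrace (adj B * B)) \<le> real N"
    using hs_shift_le[of Q N c] Q Npos hsQ unfolding B_def c_def N_def by simp
  have hsB0: "Re (mtrace (adj B * B)) \<ge> 0" by (rule hs_nonneg[OF BC])
  show ?thesis
  proof (cases "Re (mtrace (adj B * B)) = 0")
    case True
    then have "B = 0\<^sub>m N N" using hs_zero[OF BC] by simp
    then have "U * B * adj U = B" using U aU unfolding N_def by simp
    then have "f Q = 0" using fQB unfolding f_def by simp
    then show ?thesis using Q0 unfolding f_def by (intro exI[of _ Q0]) auto
  next
    case False
    define r where "r = sqrt (Re (mtrace (adj B * B)) / real N)"
    have rpos: "r > 0" using False hsB0 Npos unfolding r_def by simp
    have r2: "r\<^sup>2 = Re (mtrace (adj B * B)) / real N" unfolding r_def using hsB0 by simp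
    have r2le: "r\<^sup>2 \<le> 1" using r2 hsB Npos by simp
    define Bh where "Bh = complex_of_real (1 / r) \<cdot>\<^sub>m B"
    have BhC: "Bh \<in> carrier_mat N N" using BC unfolding Bh_def by simp
    have BBh: "B = complex_of_real r \<cdot>\<^sub>m Bh"
      using BC rpos unfolding Bh_def by (intro eq_matI) auto
    have trBh: "mtrace Bh = 0" unfolding Bh_def using mtrace_smult[OF BC] trB by simp
    have hsBh: "hs_norm d n Bh = 1"
    proof -
      have "Re (mtrace (adj Bh * Bh)) = (1 / r)\<^sup>2 * Re (mtrace (adj B * B))"
        unfolding Bh_def by (rule hs_scale[OF BC])
      also have "\<dots> = real N" using r2 rpos Npos by (simp add: field_simps)
      finally show ?thesis unfolding hs_norm_def using rN Npos by simp
    qed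
    have UBhC: "U * Bh * adj U \<in> carrier_mat N N" using U BhC aU unfolding N_def by simp
    have "f B = r\<^sup>2 * f Bh"
    proof -
      have "U * B * adj U = complex_of_real r \<cdot>\<^sub>m (U * Bh * adj U)"
        unfolding BBh using conj_scale[of U N Bh] U BhC unfolding N_def by simp
      then have "f B = \<bar>(cmod (complex_of_real r))\<^sup>2 * influence d n (U * Bh * adj U)
          - (cmod (complex_of_real r))\<^sup>2 * influence d n Bh\<bar>"
        unfolding f_def using infl_scale[of _ d n] UBhC BhC unfolding N_def by (simp add: BBh)
      also have "\<dots> = r\<^sup>2 * f Bh" unfolding f_def using rpos
        by (simp add: right_diff_distrib[symmetric] abs_mult)
      finally show ?thesis .
    qed
    also have "\<dots> \<le> f Bh" using r2le unfolding f_def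
      by (simp add: mult_left_le_one_le)
    finally have "f Q \<le> f Bh" using fQB by simp
    then show ?thesis using BhC hsBh trBh unfolding f_def N_def by (intro exI[of _ Bh]) auto
  qed
qed



theorem mainTheorem19:
  fixes d n :: nat and U :: "complex mat"
  assumes "d \<ge> 2" and "n \<ge> 1"
    and "U \<in> carrier_mat (d ^ n) (d ^ n)"
    and "adj U * U = 1\<^sub>m (d ^ n)" and "U * adj U = 1\<^sub>m (d ^ n)"
  shows "CiS d n U =
    (SUP Q \<in> {Q \<in> carrier_mat (d ^ n) (d ^ n). hs_norm d n Q = 1 \<and> mtrace Q = 0}.
       \<bar>influence d n (U * Q * adj U) - influence d n Q\<bar>)"
proof -
  let ?S = "{Q \<in> carrier_mat (d ^ n) (d ^ n). hs_norm d n Q = 1}"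
  let ?T = "{Q \<in> carrier_mat (d ^ n) (d ^ n). hs_norm d n Q = 1 \<and> mtrace Q = 0}"
  let ?f = "\<lambda>Q. \<bar>influence d n (U * Q * adj U) - influence d n Q\<bar>"
  obtain Q0 where Q0: "Q0 \<in> carrier_mat (d ^ n) (d ^ n)" "hs_norm d n Q0 = 1" "mtrace Q0 = 0"
    using exists_traceless[OF assms(1,2)] by blast
  have ub: "(\<forall>x\<in>?f ` ?S. x \<le> z) = (\<forall>x\<in>?f ` ?T. x \<le> z)" for z
  proof
    assume "\<forall>x\<in>?f ` ?S. x \<le> z"
    then show "\<forall>x\<in>?f ` ?T. x \<le> z" by auto
  next
    assume h: "\<forall>x\<in>?f ` ?T. x \<le> z"
    show "\<forall>x\<in>?f ` ?S. x \<le> z"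
    proof
      fix x assume "x \<in> ?f ` ?S"
      then obtain Q where Q: "Q \<in> ?S" and x: "x = ?f Q" by blast
      obtain Q' where Q': "Q' \<in> ?T" "?f Q \<le> ?f Q'"
        using key[OF assms(1,2,3,5) _ _ Q0, of Q] Q by blast
      have "?f Q' \<le> z" using h Q'(1) by blast
      then show "x \<le> z" using x Q'(2) by linarith
    qed
  qed
  show ?thesis unfolding CiS_def Sup_real_def by (simp only: ub)
qed

end
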